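(* For every finite tuple $(b_1,\dots,b_k)$ of elements of $\mathbb{S}$ there is $g\in\mathrm{Aut}(\mathbb{S})$ such that the set of columns meeting $\{b_1,\dots,b_k\}$ and the set of columns meeting $\{g(b_1),\dots,g(b_k)\}$ are disjoint.
   Context: Directed graphs are simple and loopless ($x\to y$ denotes a directed edge, at most one direction between two distinct vertices). $\mathcal{S}$ is the class of finite such graphs in which $x\perp y:\Leftrightarrow\neg(x\to y\vee y\to x)$ is an equivalence relation (its classes are called columns) and satisfying the parity condition: for $x_1\neq x_2$, $y_1\neq y_2$ with $x_1\perp x_2$, $y_1\perp y_2$, the number of directed edges from $\{x_1,x_2\}$ to $\{y_1,y_2\}$ is even. $\mathbb{S}$ (the semigeneric directed graph) is the Fraïssé limit of $\mathcal{S}$, i.e. the countable homogeneous directed graph whose finite induced substructures are exactly the members of $\mathcal{S}$ up to isomorphism. *)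

theory Defs
  imports Main "HOL-Library.Countable_Set"
begin

definition perp :: "('a \<Rightarrow> 'a \<Rightarrow> bool) \<Rightarrow> 'a \<Rightarrow> 'a \<Rightarrow> bool" where
  "perp E x y \<longleftrightarrow> \<not> (E x y \<or> E y x)"

definition simple_digraph_on :: "'a set \<Rightarrow> ('a \<Rightarrow> 'a \<Rightarrow> bool) \<Rightarrow> bool" where
  "simple_digraph_on A E \<longleftrightarrow>
     (\<forall>x\<in>A. \<not> E x x) \<and> (\<forall>x\<in>A. \<forall>y\<in>A. \<not> (E x y \<and> E y x))"

definition in_class_S :: "'a set \<Rightarrow> ('a \<Rightarrow> 'a \<Rightarrow> bool) \<Rightarrow> bool" where
  "in_class_S A E \<longleftrightarrow>
     finite A \<and> simple_digraph_on A E \<and>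
     (\<forall>x\<in>A. perp E x x) \<and>
     (\<forall>x\<in>A. \<forall>y\<in>A. perp E x y \<longrightarrow> perp E y x) \<and>
     (\<forall>x\<in>A. \<forall>y\<in>A. \<forall>z\<in>A. perp E x y \<longrightarrow> perp E y z \<longrightarrow> perp E x z) \<and>
     (\<forall>x1\<in>A. \<forall>x2\<in>A. \<forall>y1\<in>A. \<forall>y2\<in>A.
        x1 \<noteq> x2 \<longrightarrow> y1 \<noteq> y2 \<longrightarrow> perp E x1 x2 \<longrightarrow> perp E y1 y2 \<longrightarrow>
        even (card {(x, y). x \<in> {x1, x2} \<and> y \<in> {y1, y2} \<and> E x y}))"

definition is_aut :: "('a \<Rightarrow> 'a \<Rightarrow> bool) \<Rightarrow> ('a \<Rightarrow> 'a) \<Rightarrow> bool" where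
  "is_aut E g \<longleftrightarrow> bij g \<and> (\<forall>x y. E x y \<longleftrightarrow> E (g x) (g y))"

definition homogeneous :: "('a \<Rightarrow> 'a \<Rightarrow> bool) \<Rightarrow> bool" where
  "homogeneous E \<longleftrightarrow>
     (\<forall>A B f. finite A \<longrightarrow> bij_betw f A B \<longrightarrow>
        (\<forall>x\<in>A. \<forall>y\<in>A. E x y \<longleftrightarrow> E (f x) (f y)) \<longrightarrow>
        (\<exists>g. is_aut E g \<and> (\<forall>x\<in>A. g x = f x)))"

text \<open>The age of (UNIV, E) is exactly S up to isomorphism: every finite induced
  substructure lies in S, and every member of S (represented on {..<n}) embeds
  as an induced substructure.\<close>

definition age_is_S :: "('a \<Rightarrow> 'a \<Rightarrow> bool) \<Rightarrow> bool" where
  "age_is_S E \<longleftrightarrow>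
     (\<forall>A. finite A \<longrightarrow> in_class_S A E) \<and>
     (\<forall>(n::nat) (R :: nat \<Rightarrow> nat \<Rightarrow> bool). in_class_S {..<n} R \<longrightarrow>
        (\<exists>f. inj_on f {..<n} \<and>
             (\<forall>i<n. \<forall>j<n. R i j \<longleftrightarrow> E (f i) (f j))))"

text \<open>The semigeneric directed graph: the countable homogeneous digraph whose
  age is S (the Fraisse limit of S, unique up to isomorphism).\<close>

definition semigeneric :: "('a \<Rightarrow> 'a \<Rightarrow> bool) \<Rightarrow> bool" where
  "semigeneric E \<longleftrightarrow> countable (UNIV :: 'a set) \<and> homogeneous E \<and> age_is_S E"

definition column :: "('a \<Rightarrow> 'a \<Rightarrow> bool) \<Rightarrow> 'a \<Rightarrow> 'a set" where
  "column E x = {y. perp E x y}"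

definition columns :: "('a \<Rightarrow> 'a \<Rightarrow> bool) \<Rightarrow> 'a set set" where
  "columns E = range (column E)"

definition columns_meeting :: "('a \<Rightarrow> 'a \<Rightarrow> bool) \<Rightarrow> 'a set \<Rightarrow> 'a set set" where
  "columns_meeting E B = {C \<in> columns E. C \<inter> B \<noteq> {}}"

end

theory Submission
  imports Defs
begin

definition dbl :: "(nat \<Rightarrow> 'a) \<Rightarrow> nat \<Rightarrow> ('a \<Rightarrow> 'a \<Rightarrow> bool) \<Rightarrow> nat \<Rightarrow> nat \<Rightarrow> bool" where
  "dbl h m E i j \<longleftrightarrow> i < 2*m \<and> j < 2*m \<and>
     (((i<m) = (j<m) \<and> E (h (i mod m)) (h (j mod m))) \<or> (i<m \<and> m \<le> j))"

lemma mod_lt2: "(i::nat) < 2*m \<Longrightarrow> i mod m < m"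
  by (cases "m = 0") auto

lemma mod_inj2: "(i::nat) < 2*m \<Longrightarrow> j < 2*m \<Longrightarrow> (i<m) = (j<m) \<Longrightarrow> i mod m = j mod m \<Longrightarrow> i = j"
proof -
  assume a: "i < 2*m" "j < 2*m" "(i<m) = (j<m)" "i mod m = j mod m"
  show "i = j"
  proof (cases "i < m")
    case True then show ?thesis using a by auto
  next
    case False
    then have "i mod m = i - m" "j mod m = j - m" using a
      by (auto simp: le_mod_geq)
    then show ?thesis using a False by auto
  qed
qed

lemma perp_dbl:
  assumes "i < 2*m" "j < 2*m"
  shows "perp (dbl h m E) i j \<longleftrightarrow> (i<m) = (j<m) \<and> perp E (h (i mod m)) (h (j mod m))"
  using assms unfolding perp_def dbl_def by auto

lemma classR:
  assumes cS: "in_class_S (h ` {..<m}) E" and inj: "inj_on h {..<m}"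
  shows "in_class_S {..<2*m} (dbl h m E)"
proof -
  let ?R = "dbl h m E"
  have hin: "\<And>i. i < 2*m \<Longrightarrow> h (i mod m) \<in> h ` {..<m}" using mod_lt2 by auto
  from cS have sd: "simple_digraph_on (h ` {..<m}) E"
    and tr: "\<forall>x\<in>h ` {..<m}. \<forall>y\<in>h ` {..<m}. \<forall>z\<in>h ` {..<m}. perp E x y \<longrightarrow> perp E y z \<longrightarrow> perp E x z"
    and par: "\<forall>x1\<in>h ` {..<m}. \<forall>x2\<in>h ` {..<m}. \<forall>y1\<in>h ` {..<m}. \<forall>y2\<in>h ` {..<m}.
        x1 \<noteq> x2 \<longrightarrow> y1 \<noteq> y2 \<longrightarrow> perp E x1 x2 \<longrightarrow> perp E y1 y2 \<longrightarrow>
        even (card {(x, y). x \<in> {x1, x2} \<and> y \<in> {y1, y2} \<and> E x y})"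
    unfolding in_class_S_def by blast+
  have simp1: "simple_digraph_on {..<2*m} ?R"
  proof -
    have nl: "\<not> E (h (i mod m)) (h (i mod m))" if "i < 2*m" for i
      using sd hin[OF that] unfolding simple_digraph_on_def by blast
    have na: "\<not> (E (h (i mod m)) (h (j mod m)) \<and> E (h (j mod m)) (h (i mod m)))"
      if "i < 2*m" "j < 2*m" for i j
      using sd hin[OF that(1)] hin[OF that(2)] unfolding simple_digraph_on_def by blast
    show ?thesis unfolding simple_digraph_on_def
    proof (intro conjI ballI)
      fix x assume "x \<in> {..<2*m}" then have "x < 2*m" by simp
      then show "\<not> ?R x x" using nl[of x] unfolding dbl_def by auto
    next
      fix x y assume "x \<in> {..<2*m}" "y \<in> {..<2*m}"
      then have "x < 2*m" "y < 2*m" by simp_all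
      then show "\<not> (?R x y \<and> ?R y x)" using na[of x y] unfolding dbl_def by auto
    qed
  qed
  have p1: "\<forall>x\<in>{..<2*m}. perp ?R x x" using simp1 unfolding simple_digraph_on_def perp_def by auto
  have p2: "\<forall>x\<in>{..<2*m}. \<forall>y\<in>{..<2*m}. perp ?R x y \<longrightarrow> perp ?R y x" unfolding perp_def by auto
  have p3: "\<forall>x\<in>{..<2*m}. \<forall>y\<in>{..<2*m}. \<forall>z\<in>{..<2*m}. perp ?R x y \<longrightarrow> perp ?R y z \<longrightarrow> perp ?R x z"
  proof (intro ballI impI)
    fix x y z assume xyz: "x \<in> {..<2*m}" "y \<in> {..<2*m}" "z \<in> {..<2*m}"
      and "perp ?R x y" "perp ?R y z"
    then have "(x<m) = (y<m)" "perp E (h (x mod m)) (h (y mod m))"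
      "(y<m) = (z<m)" "perp E (h (y mod m)) (h (z mod m))"
      using perp_dbl[of x m y] perp_dbl[of y m z] by auto
    moreover have "perp E (h (x mod m)) (h (z mod m))"
      using tr hin xyz calculation by (meson lessThan_iff)
    ultimately show "perp ?R x z" using perp_dbl[of x m z] xyz by auto
  qed
  have p4: "even (card {(x, y). x \<in> {x1, x2} \<and> y \<in> {y1, y2} \<and> ?R x y})"
    if a: "x1 < 2*m" "x2 < 2*m" "y1 < 2*m" "y2 < 2*m" "x1 \<noteq> x2" "y1 \<noteq> y2"
      "perp ?R x1 x2" "perp ?R y1 y2" for x1 x2 y1 y2
  proof -
    have sx: "(x1<m) = (x2<m)" and px: "perp E (h (x1 mod m)) (h (x2 mod m))"
      using a perp_dbl by blast+
    have sy: "(y1<m) = (y2<m)" and py: "perp E (h (y1 mod m)) (h (y2 mod m))"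
      using a perp_dbl by blast+
    show ?thesis
    proof (cases "(x1<m) = (y1<m)")
      case True
      let ?q = "\<lambda>(x,y). (h (x mod m), h (y mod m))"
      let ?S = "{(x, y). x \<in> {x1, x2} \<and> y \<in> {y1, y2} \<and> ?R x y}"
      let ?T = "{(x, y). x \<in> {h (x1 mod m), h (x2 mod m)} \<and> y \<in> {h (y1 mod m), h (y2 mod m)} \<and> E x y}"
      have hx: "h (x1 mod m) \<noteq> h (x2 mod m)"
        using a sx mod_inj2[of x1 m x2] mod_lt2[of x1 m] mod_lt2[of x2 m] inj unfolding inj_on_def by auto
      have hy: "h (y1 mod m) \<noteq> h (y2 mod m)"
        using a sy mod_inj2[of y1 m y2] mod_lt2[of y1 m] mod_lt2[of y2 m] inj unfolding inj_on_def by auto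
      have ev: "even (card ?T)"
        using par[rule_format, OF hin[OF a(1)] hin[OF a(2)] hin[OF a(3)] hin[OF a(4)] hx hy px py] .
      have injq: "inj_on ?q ?S"
      proof (rule inj_onI)
        fix p1 p2 assume pp: "p1 \<in> ?S" "p2 \<in> ?S" "?q p1 = ?q p2"
        obtain a1 b1 where p1: "p1 = (a1,b1)" by (cases p1)
        obtain a2 b2 where p2: "p2 = (a2,b2)" by (cases p2)
        from pp have m1: "a1 \<in> {x1,x2}" "a2 \<in> {x1,x2}" "b1 \<in> {y1,y2}" "b2 \<in> {y1,y2}"
          and eq: "h (a1 mod m) = h (a2 mod m)" "h (b1 mod m) = h (b2 mod m)" unfolding p1 p2 by auto
        then have lt: "a1 < 2*m" "a2 < 2*m" "b1 < 2*m" "b2 < 2*m" and sd1: "(a1<m) = (a2<m)" "(b1<m) = (b2<m)"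
          using a sx sy by auto
        have "a1 mod m = a2 mod m" using inj eq(1) mod_lt2[OF lt(1)] mod_lt2[OF lt(2)]
          unfolding inj_on_def by blast
        moreover have "b1 mod m = b2 mod m" using inj eq(2) mod_lt2[OF lt(3)] mod_lt2[OF lt(4)]
          unfolding inj_on_def by blast
        ultimately show "p1 = p2" unfolding p1 p2 using mod_inj2[OF lt(1) lt(2) sd1(1)] mod_inj2[OF lt(3) lt(4) sd1(2)] by simp
      qed
      have img: "?q ` ?S = ?T"
      proof
        show "?q ` ?S \<subseteq> ?T" using True sx sy a unfolding dbl_def by auto
        show "?T \<subseteq> ?q ` ?S"
        proof clarify
          fix u v assume uv: "u \<in> {h (x1 mod m), h (x2 mod m)}" "v \<in> {h (y1 mod m), h (y2 mod m)}" "E u v"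
          then obtain x y where "x \<in> {x1,x2}" "y \<in> {y1,y2}" "u = h (x mod m)" "v = h (y mod m)" by auto
          moreover then have "?R x y" using uv True sx sy a unfolding dbl_def by auto
          ultimately show "(u,v) \<in> ?q ` ?S" by force
        qed
      qed
      have "card ?S = card ?T" using card_image[OF injq] img by simp
      then show ?thesis using ev by simp
    next
      case False
      show ?thesis
      proof (cases "x1 < m")
        case True
        then have "{(x, y). x \<in> {x1, x2} \<and> y \<in> {y1, y2} \<and> ?R x y} = {x1,x2} \<times> {y1,y2}"
          using False sx sy a unfolding dbl_def by auto
        then show ?thesis using a by (simp add: card_cartesian_product)
      next
        case c: False
        then have "{(x, y). x \<in> {x1, x2} \<and> y \<in> {y1, y2} \<and> ?R x y} = {}"
          using False sx sy a unfolding dbl_def by auto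
        then show ?thesis by (simp only: card.empty even_zero)
      qed
    qed
  qed
  have p4': "\<forall>x1\<in>{..<2*m}. \<forall>x2\<in>{..<2*m}. \<forall>y1\<in>{..<2*m}. \<forall>y2\<in>{..<2*m}.
        x1 \<noteq> x2 \<longrightarrow> y1 \<noteq> y2 \<longrightarrow> perp ?R x1 x2 \<longrightarrow> perp ?R y1 y2 \<longrightarrow>
        even (card {(x, y). x \<in> {x1, x2} \<and> y \<in> {y1, y2} \<and> ?R x y})"
  proof (intro ballI impI)
    fix x1 x2 y1 y2 assume "x1 \<in> {..<2*m}" "x2 \<in> {..<2*m}" "y1 \<in> {..<2*m}" "y2 \<in> {..<2*m}"
      "x1 \<noteq> x2" "y1 \<noteq> y2" "perp ?R x1 x2" "perp ?R y1 y2"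
    then show "even (card {(x, y). x \<in> {x1, x2} \<and> y \<in> {y1, y2} \<and> ?R x y})"
      using p4[of x1 x2 y1 y2] by simp
  qed
  have fin: "finite {..<2*m}" by simp
  show ?thesis unfolding in_class_S_def using fin simp1 p1 p2 p3 p4' by (intro conjI)
qed

lemma aut_inv: "is_aut E g \<Longrightarrow> is_aut E (inv g)"
  unfolding is_aut_def by (metis bij_imp_bij_inv bij_inv_eq_iff)

lemma aut_comp: "is_aut E g \<Longrightarrow> is_aut E f \<Longrightarrow> is_aut E (g \<circ> f)"
  unfolding is_aut_def by (auto intro: bij_comp)

theorem mainTheorem9:
  fixes E :: "'a \<Rightarrow> 'a \<Rightarrow> bool" and bs :: "'a list"
  assumes "semigeneric E"
  shows "\<exists>g. is_aut E g \<and>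
           columns_meeting E (set bs) \<inter> columns_meeting E (g ` set bs) = {}"
proof -
  have hom: "homogeneous E" and age: "age_is_S E" using assms unfolding semigeneric_def by auto
  have allS: "in_class_S A E" if "finite A" for A
    using conjunct1[OF age[unfolded age_is_S_def]] that by blast
  define cs where "cs = remdups bs"
  define m where "m = length cs"
  define h where "h = (\<lambda>i. cs ! i)"
  define B where "B = set bs"
  have hB: "h ` {..<m} = B"
  proof -
    have "h ` {..<m} = set cs" unfolding h_def m_def by (auto simp: set_conv_nth)
    then show ?thesis unfolding cs_def B_def by simp
  qed
  have inj: "inj_on h {..<m}" unfolding h_def m_def cs_def
    by (simp add: inj_on_def nth_eq_iff_index_eq)
  have finB: "finite B" unfolding B_def by simp
  have cls: "in_class_S {..<2*m} (dbl h m E)" using classR[of h m E] allS[OF finB] hB inj by simp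
  obtain f where finj: "inj_on f {..<2*m}"
    and fR0: "\<forall>i<2*m. \<forall>j<2*m. dbl h m E i j \<longleftrightarrow> E (f i) (f j)"
    using conjunct2[OF age[unfolded age_is_S_def], rule_format, OF cls] by blast
  have fR: "dbl h m E i j \<longleftrightarrow> E (f i) (f j)" if "i < 2*m" "j < 2*m" for i j
    using fR0 that by blast
  define \<iota> where "\<iota> = inv_into {..<m} h"
  have iota: "\<iota> b < m \<and> h (\<iota> b) = b" if "b \<in> B" for b
  proof -
    have b: "b \<in> h ` {..<m}" using that hB by simp
    show ?thesis unfolding \<iota>_def using inv_into_into[OF b] f_inv_into_f[OF b] by simp
  qed
  have hE: "E (h i) (h j) \<longleftrightarrow> E (f i) (f j)" if "i < m" "j < m" for i j
  proof -
    have "dbl h m E i j \<longleftrightarrow> E (h i) (h j)" using that unfolding dbl_def by simp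
    then show ?thesis using fR[of i j] that by simp
  qed
  have hE2: "E (h i) (h j) \<longleftrightarrow> E (f (i+m)) (f (j+m))" if "i < m" "j < m" for i j
  proof -
    have "(i+m) mod m = i" "(j+m) mod m = j" using that by simp_all
    then have "dbl h m E (i+m) (j+m) \<longleftrightarrow> E (h i) (h j)" using that unfolding dbl_def by simp
    then show ?thesis using fR[of "i+m" "j+m"] that by simp
  qed
  have cross: "E (f i) (f (j+m))" if "i < m" "j < m" for i j
  proof -
    have "dbl h m E i (j+m)" using that unfolding dbl_def by simp
    then show ?thesis using fR[of i "j+m"] that by simp
  qed
  define \<phi>1 where "\<phi>1 = (\<lambda>b. f (\<iota> b))"
  have "inj_on \<phi>1 B"
  proof (rule inj_onI)
    fix x y assume xy: "x \<in> B" "y \<in> B" "\<phi>1 x = \<phi>1 y"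
    have "\<iota> x \<in> {..<2*m}" "\<iota> y \<in> {..<2*m}" using iota[OF xy(1)] iota[OF xy(2)] by auto
    then have "\<iota> x = \<iota> y" using finj xy(3) unfolding \<phi>1_def inj_on_def by blast
    then show "x = y" using iota[OF xy(1)] iota[OF xy(2)] by metis
  qed
  then have b1: "bij_betw \<phi>1 B (\<phi>1 ` B)" by (simp add: bij_betw_imageI)
  have e1: "\<forall>x\<in>B. \<forall>y\<in>B. E x y \<longleftrightarrow> E (\<phi>1 x) (\<phi>1 y)"
  proof (intro ballI)
    fix x y assume "x \<in> B" "y \<in> B"
    then show "E x y \<longleftrightarrow> E (\<phi>1 x) (\<phi>1 y)"
      using iota[of x] iota[of y] hE[of "\<iota> x" "\<iota> y"] unfolding \<phi>1_def by simp
  qed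
  obtain g1 where g1: "is_aut E g1" "\<forall>x\<in>B. g1 x = \<phi>1 x"
    using hom[unfolded homogeneous_def, rule_format, OF finB b1 e1[rule_format]] by blast
  define \<phi>2 where "\<phi>2 = (\<lambda>b. f (\<iota> b + m))"
  have "inj_on \<phi>2 B"
  proof (rule inj_onI)
    fix x y assume xy: "x \<in> B" "y \<in> B" "\<phi>2 x = \<phi>2 y"
    have "\<iota> x + m \<in> {..<2*m}" "\<iota> y + m \<in> {..<2*m}" using iota[OF xy(1)] iota[OF xy(2)] by auto
    then have "\<iota> x + m = \<iota> y + m" using finj xy(3) unfolding \<phi>2_def inj_on_def by blast
    then show "x = y" using iota[OF xy(1)] iota[OF xy(2)] by (metis add_right_cancel)
  qed
  then have b2: "bij_betw \<phi>2 B (\<phi>2 ` B)" by (simp add: bij_betw_imageI)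
  have e2: "\<forall>x\<in>B. \<forall>y\<in>B. E x y \<longleftrightarrow> E (\<phi>2 x) (\<phi>2 y)"
  proof (intro ballI)
    fix x y assume "x \<in> B" "y \<in> B"
    then show "E x y \<longleftrightarrow> E (\<phi>2 x) (\<phi>2 y)"
      using iota[of x] iota[of y] hE2[of "\<iota> x" "\<iota> y"] unfolding \<phi>2_def by simp
  qed
  obtain g2 where g2: "is_aut E g2" "\<forall>x\<in>B. g2 x = \<phi>2 x"
    using hom[unfolded homogeneous_def, rule_format, OF finB b2 e2[rule_format]] by blast
  define g where "g = inv g1 \<circ> g2"
  have aut: "is_aut E g" unfolding g_def using aut_comp[OF aut_inv[OF g1(1)] g2(1)] .
  have bg1: "bij g1" using g1 unfolding is_aut_def by blast
  have edge: "E b (g b')" if "b \<in> B" "b' \<in> B" for b b'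
  proof -
    have gg: "g1 (g b') = \<phi>2 b'" unfolding g_def using g2(2) that bij_inv_eq_iff[OF bg1] by auto
    have "E (\<phi>1 b) (\<phi>2 b')" unfolding \<phi>1_def \<phi>2_def
      using cross iota[OF that(1)] iota[OF that(2)] by blast
    then have "E (g1 b) (g1 (g b'))" using gg g1(2) that(1) by simp
    then show ?thesis using g1(1) unfolding is_aut_def by blast
  qed
  have "columns_meeting E B \<inter> columns_meeting E (g ` B) = {}"
  proof (rule ccontr)
    assume "columns_meeting E B \<inter> columns_meeting E (g ` B) \<noteq> {}"
    then obtain x b b' where xb: "b \<in> B" "b' \<in> B" "perp E x b" "perp E x (g b')"
      unfolding columns_meeting_def columns_def column_def by blast
    have S: "in_class_S {x, b, g b'} E" using allS by simp
    have sym: "perp E b x" using xb(3) unfolding perp_def by blast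
    have "perp E b (g b')" using S sym xb(4) unfolding in_class_S_def by blast
    then show False using edge[OF xb(1) xb(2)] unfolding perp_def by blast
  qed
  then show ?thesis using aut unfolding B_def by blast
qed

end
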